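(* Let $Z$ be a bounded metric space with at least two points and finite capacity dimension $n=\operatorname{cdim}Z$. Then there is $r_0>0$ such that for every $r\in(0,r_0)$ there exists a sequence $(\mathcal U_j)_{j\ge0}$ of $(n+1)$-colored (by a set $C$, $|C|=n+1$) open coverings $\mathcal U_j=\bigcup_{c\in C}\mathcal U_j^c$ of $Z$ such that, for any hyperbolic approximation $X$ of $Z$ with parameter $r$, the following hold: (1) $\mathcal U_0^c=\{Z\}$ for all $c\in C$, and $\operatorname{mesh}\mathcal U_j<r^j$ for every $j\ge1$; (2) for every $v\in V_{j+1}$, $j\ge0$, there is $U\in\mathcal U_j$ with $B(v)\subset U$; (3) (separation) for every $c\in C$ and different members $U\in\mathcal U_j^c$, $U'\in\mathcal U_{j'}^c$ with $j'\le j$: setting $B(U)=\bigcup\{B(v):v\in V_{j+1},\ B(v)\cap U\neq\emptyset\}$, either $B(U)\subset U'$ or $B(U)\cap U'=\emptyset$.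
   Context: For a family $\mathcal U$ of subsets of a metric space $Z$, $\operatorname{mesh}\mathcal U=\sup_{U\in\mathcal U}\operatorname{diam}U$. An open covering $\mathcal U$ is $m$-colored if $\mathcal U=\bigcup_{c\in C}\mathcal U^c$ with $|C|=m$ and each $\mathcal U^c$ consists of pairwise disjoint sets. For an open covering, $L(\mathcal U,z)=\min\{\sup_{U\in\mathcal U}\operatorname{dist}(z,Z\setminus U),\operatorname{mesh}\mathcal U\}$, $L(\mathcal U)=\inf_zL(\mathcal U,z)$. The capacity dimension $\operatorname{cdim}Z$ is the minimal integer $m\ge0$ such that there is $\delta>0$ so that for every sufficiently small $\tau>0$ there exists an $(m+1)$-colored open covering $\mathcal U$ of $Z$ with $\operatorname{mesh}\mathcal U\le\tau$ and $L(\mathcal U)\ge\delta\tau$. Hyperbolic approximation with parameter $r\in(0,1/6]$: let $k_0$ be the largest integer with $\operatorname{diam}Z<r^{k_0}$; for each integer $k\ge k_0$ choose a maximal $r^k$-separated subset $V_k\subset Z$; the vertex set is $V=\bigsqcup_{k\ge k_0}V_k$, and to $v\in V_k$ is associated the open ball $B(v)=\{z\in Z:d(z,v)<2r^k\}$. (Edges: equal-level vertices with intersecting closed balls, or vertices on adjacent levels with the higher-level ball contained in the lower-level ball; unit edge lengths.) *)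

theory Defs
  imports "HOL-Analysis.Analysis"
begin

text \<open>The metric space Z is the whole carrier of a type of class metric_space
  (Z = UNIV). diam is the library's diameter (Z is bounded, so all subsets are).\<close>

definition mesh :: "'a::metric_space set set \<Rightarrow> real" where
  "mesh \<U> = (SUP U\<in>\<U>. diameter U)"

definition cover_of :: "'c set \<Rightarrow> ('c \<Rightarrow> 'a set set) \<Rightarrow> 'a set set" where
  "cover_of C F = (\<Union>c\<in>C. F c)"

definition colored_open_cover :: "'c set \<Rightarrow> ('c \<Rightarrow> 'a::metric_space set set) \<Rightarrow> bool" where
  "colored_open_cover C F \<longleftrightarrow> finite C \<and> (\<forall>U\<in>cover_of C F. open U)
     \<and> \<Union>(cover_of C F) = UNIV \<and> (\<forall>c\<in>C. pairwise disjnt (F c))"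

definition dist_to_compl :: "'a::metric_space \<Rightarrow> 'a set \<Rightarrow> ereal" where
  "dist_to_compl z U = (if - U = {} then \<infinity> else ereal (infdist z (- U)))"

definition lebesgue_at :: "'a::metric_space set set \<Rightarrow> 'a \<Rightarrow> ereal" where
  "lebesgue_at \<U> z = min (SUP U\<in>\<U>. dist_to_compl z U) (ereal (mesh \<U>))"

definition lebesgue :: "'a::metric_space set set \<Rightarrow> ereal" where
  "lebesgue \<U> = (INF z. lebesgue_at \<U> z)"

definition cdim_witness :: "'a::metric_space itself \<Rightarrow> nat \<Rightarrow> bool" where
  "cdim_witness T m \<longleftrightarrow> (\<exists>\<delta>>0. \<exists>\<tau>0>0. \<forall>\<tau>. 0 < \<tau> \<and> \<tau> < \<tau>0 \<longrightarrow>
     (\<exists>(C::nat set) (F::nat \<Rightarrow> 'a set set). card C = m + 1 \<and> colored_open_cover C F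
        \<and> mesh (cover_of C F) \<le> \<tau> \<and> lebesgue (cover_of C F) \<ge> ereal (\<delta> * \<tau>)))"

definition cdim :: "'a::metric_space itself \<Rightarrow> nat" where
  "cdim T = (LEAST m. cdim_witness T m)"

text \<open>Hyperbolic approximation (vertex data). V k is the set of level-k vertices.\<close>
definition separated :: "real \<Rightarrow> 'a::metric_space set \<Rightarrow> bool" where
  "separated \<epsilon> S \<longleftrightarrow> (\<forall>x\<in>S. \<forall>y\<in>S. x \<noteq> y \<longrightarrow> dist x y \<ge> \<epsilon>)"

definition max_separated :: "real \<Rightarrow> 'a::metric_space set \<Rightarrow> bool" where
  "max_separated \<epsilon> S \<longleftrightarrow> separated \<epsilon> S \<and> (\<forall>T. S \<subseteq> T \<and> separated \<epsilon> T \<longrightarrow> T = S)"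

definition hyp_k0 :: "real \<Rightarrow> 'a::metric_space itself \<Rightarrow> int" where
  "hyp_k0 r T = (GREATEST k::int. diameter (UNIV::'a set) < r powi k)"

definition hyp_approx :: "real \<Rightarrow> (int \<Rightarrow> 'a::metric_space set) \<Rightarrow> bool" where
  "hyp_approx r V \<longleftrightarrow> 0 < r \<and> r \<le> 1/6
     \<and> (\<forall>k. k \<ge> hyp_k0 r TYPE('a) \<longrightarrow> max_separated (r powi k) (V k))
     \<and> (\<forall>k. k < hyp_k0 r TYPE('a) \<longrightarrow> V k = {})"

definition hball :: "real \<Rightarrow> int \<Rightarrow> 'a::metric_space \<Rightarrow> 'a set" where
  "hball r k v = ball v (2 * r powi k)"

definition hyp_BU :: "real \<Rightarrow> (int \<Rightarrow> 'a::metric_space set) \<Rightarrow> nat \<Rightarrow> 'a set \<Rightarrow> 'a set" where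
  "hyp_BU r V j U = \<Union>{hball r (int j + 1) v | v. v \<in> V (int j + 1) \<and> hball r (int j + 1) v \<inter> U \<noteq> {}}"

end

theory Submission
  imports Defs
begin

locale hc =
  fixes r g :: real and Pc :: "'p set" and lev :: "'p \<Rightarrow> nat" and col :: "'p \<Rightarrow> nat"
    and K :: "'p \<Rightarrow> 'a::metric_space set"
  assumes r_pos: "0 < r" and r_small: "r \<le> 1/100" and g_big: "25 * r < g"
  and gap: "\<And>p q a b. p \<in> Pc \<Longrightarrow> q \<in> Pc \<Longrightarrow> p \<noteq> q \<Longrightarrow> lev p = lev q \<Longrightarrow> col p = col q
       \<Longrightarrow> a \<in> K p \<Longrightarrow> b \<in> K q \<Longrightarrow> g * r ^ lev p \<le> dist a b"
  and diam: "\<And>p a b. p \<in> Pc \<Longrightarrow> a \<in> K p \<Longrightarrow> b \<in> K p \<Longrightarrow> dist a b \<le> r ^ lev p / 2"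
begin

inductive inF :: "'p \<Rightarrow> 'a \<Rightarrow> bool" where
  base: "k \<in> K p \<Longrightarrow> dist x k < r ^ (lev p + 1) \<Longrightarrow> inF p x"
| step: "q \<in> Pc \<Longrightarrow> col q = col p \<Longrightarrow> lev p < lev q \<Longrightarrow> inF p y \<Longrightarrow> inF q u
     \<Longrightarrow> dist y u < 4 * r ^ (lev q + 1) \<Longrightarrow> inF q u' \<Longrightarrow> dist x u' < 4 * r ^ (lev q + 1) \<Longrightarrow> inF p x"

definition near :: "'a \<Rightarrow> 'p \<Rightarrow> real \<Rightarrow> bool" where
  "near x s a \<longleftrightarrow> (\<exists>k\<in>K s. dist x k < a)"

definition lk :: "real \<Rightarrow> 'p \<Rightarrow> 'p \<Rightarrow> bool" where
  "lk a s s' \<longleftrightarrow> s' \<in> Pc \<and> col s' = col s \<and> lev s < lev s' \<and>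
     (\<exists>x\<in>K s. \<exists>y\<in>K s'. dist x y < a + r ^ lev s')"

fun chA :: "real \<Rightarrow> 'p \<Rightarrow> 'p list \<Rightarrow> bool" where
  "chA a s [] = True"
| "chA a s (s'#ss) = (lk a s s' \<and> chA (7 * r ^ (lev s' + 1)) s' ss)"

definition lastrad :: "real \<Rightarrow> 'p list \<Rightarrow> real" where
  "lastrad a ss = (if ss = [] then a else 7 * r ^ (lev (last ss) + 1))"

lemma lastrad_cons: "lastrad a (s'#ss) = lastrad (7 * r ^ (lev s' + 1)) ss"
  by (simp add: lastrad_def)

lemma tri3: "dist a d \<le> dist a b + dist b c + dist c d"
  using dist_triangle[of a d c] dist_triangle[of a c b] by linarith

lemma rpow_mono: "m \<le> n \<Longrightarrow> r ^ n \<le> r ^ m"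
  using r_pos r_small by (intro power_decreasing) auto

lemma rpow_pos: "0 < r ^ n" using r_pos by simp

lemma tail:
  "chA a s ss \<Longrightarrow> near y (last (s#ss)) (lastrad a ss)
   \<Longrightarrow> near y s (if ss = [] then a else a + 2 * r ^ lev (hd ss))"
proof (induction ss arbitrary: a s)
  case Nil
  then show ?case by (simp add: lastrad_def)
next
  case (Cons s' ss)
  let ?a = "7 * r ^ (lev s' + 1)"
  from Cons.prems have lk: "lk a s s'" and ch: "chA ?a s' ss" by auto
  from lk obtain k k' where k: "k \<in> K s" "k' \<in> K s'" "dist k k' < a + r ^ lev s'" "s' \<in> Pc"
    unfolding lk_def by blast
  have "near y (last (s'#ss)) (lastrad ?a ss)"
    using Cons.prems by (simp add: lastrad_cons)
  from Cons.IH[OF ch this] have ny: "near y s' (if ss = [] then ?a else ?a + 2 * r ^ lev (hd ss))" .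
  have "near y s' (9 * r ^ (lev s' + 1))"
  proof (cases ss)
    case Nil
    from ny Nil obtain k where "k \<in> K s'" "dist y k < 7 * r ^ (lev s' + 1)" by (auto simp: near_def)
    then show ?thesis using rpow_pos[of "lev s' + 1"] unfolding near_def by (intro bexI[of _ k]) auto
  next
    case (Cons s'' ss')
    with ch have "lev s' < lev s''" by (simp add: lk_def)
    hence "r ^ lev s'' \<le> r ^ (lev s' + 1)" by (intro rpow_mono) auto
    moreover from ny Cons obtain k where "k \<in> K s'" "dist y k < 7 * r ^ (lev s' + 1) + 2 * r ^ lev s''" by (auto simp: near_def)
    ultimately show ?thesis unfolding near_def by (intro bexI[of _ k]) auto
  qed
  then obtain k'' where k'': "k'' \<in> K s'" "dist y k'' < 9 * r ^ (lev s' + 1)"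
    unfolding near_def by blast
  have d: "dist k' k'' \<le> r ^ lev s' / 2" using diam[OF k(4) k(2) k''(1)] .
  have "dist y k \<le> dist y k'' + dist k'' k' + dist k' k" by (rule tri3)
  also have "\<dots> < 9 * r ^ (lev s' + 1) + r ^ lev s' / 2 + (a + r ^ lev s')"
    using k'' d k(3) by (simp add: dist_commute)
  also have "\<dots> \<le> a + 2 * r ^ lev s'"
  proof -
    have "9 * r ^ (lev s' + 1) = (9 * r) * r ^ lev s'" by simp
    also have "\<dots> \<le> (1/2) * r ^ lev s'" using r_small rpow_pos[of "lev s'"]
      by (intro mult_right_mono) auto
    finally show ?thesis by simp
  qed
  finally show ?case using k(1) unfolding near_def by auto
qed

lemma tail_bound:
  assumes "chA a s ss" "near y (last (s#ss)) (lastrad a ss)"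
  shows "near y s (a + 2 * r ^ (lev s + 1))"
proof -
  have t: "near y s (if ss = [] then a else a + 2 * r ^ lev (hd ss))" using tail[OF assms] .
  show ?thesis
  proof (cases ss)
    case Nil
    from t Nil obtain k where "k \<in> K s" "dist y k < a" by (auto simp: near_def)
    then show ?thesis using rpow_pos[of "lev s + 1"] unfolding near_def by (intro bexI[of _ k]) auto
  next
    case (Cons s' ss')
    with assms(1) have "lev s < lev s'" by (simp add: lk_def)
    hence "r ^ lev s' \<le> r ^ (lev s + 1)" by (intro rpow_mono) auto
    moreover from t Cons obtain k where "k \<in> K s" "dist y k < a + 2 * r ^ lev s'" by (auto simp: near_def)
    ultimately show ?thesis unfolding near_def by (intro bexI[of _ k]) auto
  qed
qed

lemma pop:
  "chA a s ss \<Longrightarrow> near y (last (s#ss)) (lastrad a ss) \<Longrightarrow> q \<in> Pc \<Longrightarrow> col q = col s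
   \<Longrightarrow> lev s < lev q \<Longrightarrow> near y q (7 * r ^ (lev q + 1)) \<Longrightarrow> near x q (7 * r ^ (lev q + 1))
   \<Longrightarrow> \<exists>ss'. chA a s ss' \<and> near x (last (s#ss')) (lastrad a ss')"
proof (induction ss arbitrary: a s)
  case Nil
  from Nil.prems obtain k where k: "k \<in> K s" "dist y k < a" by (auto simp: near_def lastrad_def)
  from Nil.prems obtain kq where kq: "kq \<in> K q" "dist y kq < 7 * r ^ (lev q + 1)" by (auto simp: near_def)
  have "dist k kq \<le> dist y k + dist y kq" by (rule dist_triangle3)
  also have "\<dots> < a + 7 * r ^ (lev q + 1)" using k kq by simp
  also have "\<dots> \<le> a + r ^ lev q"
  proof -
    have "7 * r ^ (lev q + 1) = (7 * r) * r ^ lev q" by simp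
    also have "\<dots> \<le> 1 * r ^ lev q" using r_small rpow_pos[of "lev q"]
      by (intro mult_right_mono) auto
    finally show ?thesis by simp
  qed
  finally have "lk a s q" using Nil.prems k kq unfolding lk_def by auto
  then show ?case using Nil.prems by (intro exI[of _ "[q]"]) (simp add: lastrad_def)
next
  case (Cons s' ss)
  let ?a = "7 * r ^ (lev s' + 1)"
  from Cons.prems have lk: "lk a s s'" and ch: "chA ?a s' ss" by auto
  have ny': "near y (last (s'#ss)) (lastrad ?a ss)"
    using Cons.prems by (simp add: lastrad_cons)
  from Cons.prems obtain kq where kq: "kq \<in> K q" "dist y kq < 7 * r ^ (lev q + 1)" by (auto simp: near_def)
  consider "lev s' < lev q" | "lev s' = lev q" | "lev q < lev s'" by linarith
  then show ?case
  proof cases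
    case 1
    have "col q = col s'" using lk Cons.prems by (simp add: lk_def)
    from Cons.IH[OF ch ny' Cons.prems(3) this 1 Cons.prems(6,7)] obtain ss' where
      "chA ?a s' ss'" "near x (last (s'#ss')) (lastrad ?a ss')" by blast
    then show ?thesis using lk by (intro exI[of _ "s'#ss'"]) (simp add: lastrad_cons)
  next
    case 2
    have "near y s' (?a + 2 * r ^ (lev s' + 1))" by (rule tail_bound[OF ch ny'])
    then obtain k where k: "k \<in> K s'" "dist y k < 9 * r ^ (lev s' + 1)" by (auto simp: near_def)
    have "s' = q"
    proof (rule ccontr)
      assume ne: "s' \<noteq> q"
      have "g * r ^ lev s' \<le> dist k kq"
        using gap[OF _ Cons.prems(3) ne 2 _ k(1) kq(1)] lk Cons.prems(4) by (auto simp: lk_def)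
      also have "dist k kq \<le> dist y k + dist y kq" by (rule dist_triangle3)
      also have "\<dots> < 16 * r ^ (lev s' + 1)" using k kq 2 by simp
      also have "\<dots> = (16 * r) * r ^ lev s'" by simp
      also have "\<dots> \<le> g * r ^ lev s'" using g_big r_pos rpow_pos[of "lev s'"]
        by (intro mult_right_mono) auto
      finally show False by simp
    qed
    then show ?thesis using lk Cons.prems by (intro exI[of _ "[s']"]) (simp add: lastrad_def)
  next
    case 3
    have "near y s (a + 2 * r ^ lev s')"
      using tail[OF Cons.prems(1,2)] by simp
    then obtain k where k: "k \<in> K s" "dist y k < a + 2 * r ^ lev s'" by (auto simp: near_def)
    have "r ^ lev s' \<le> r ^ (lev q + 1)" using 3 by (intro rpow_mono) auto
    have "dist k kq \<le> dist y k + dist y kq" by (rule dist_triangle3)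
    also have "\<dots> < a + 2 * r ^ lev s' + 7 * r ^ (lev q + 1)" using k kq by simp
    also have "\<dots> \<le> a + 9 * r ^ (lev q + 1)" using \<open>r ^ lev s' \<le> r ^ (lev q + 1)\<close> by simp
    also have "\<dots> \<le> a + r ^ lev q"
    proof -
      have "9 * r ^ (lev q + 1) = (9 * r) * r ^ lev q" by simp
      also have "\<dots> \<le> 1 * r ^ lev q" using r_small rpow_pos[of "lev q"]
        by (intro mult_right_mono) auto
      finally show ?thesis by simp
    qed
    finally have "lk a s q" using Cons.prems k kq unfolding lk_def by auto
    then show ?thesis using Cons.prems by (intro exI[of _ "[q]"]) (simp add: lastrad_def)
  qed
qed

lemma inF_chain:
  "inF p x \<Longrightarrow> \<exists>ss. chA (r ^ (lev p + 1)) p ss \<and> near x (last (p#ss)) (lastrad (r ^ (lev p + 1)) ss)"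
proof (induction rule: inF.induct)
  case (base k p x)
  then show ?case by (intro exI[of _ "[]"]) (auto simp: lastrad_def near_def)
next
  case (step q p y u u' x)
  have bu: "near u q (3 * r ^ (lev q + 1))" and bu': "near u' q (3 * r ^ (lev q + 1))"
    using tail_bound[of "r ^ (lev q + 1)" q] step.IH(2,3) by fastforce+
  have "near y q (7 * r ^ (lev q + 1))"
  proof -
    from bu obtain k where "k \<in> K q" "dist u k < 3 * r ^ (lev q + 1)" by (auto simp: near_def)
    moreover have "dist y k \<le> dist y u + dist u k" by (rule dist_triangle)
    ultimately show ?thesis using step.hyps(6) unfolding near_def by force
  qed
  moreover have "near x q (7 * r ^ (lev q + 1))"
  proof -
    from bu' obtain k where "k \<in> K q" "dist u' k < 3 * r ^ (lev q + 1)" by (auto simp: near_def)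
    moreover have "dist x k \<le> dist x u' + dist u' k" by (rule dist_triangle)
    ultimately show ?thesis using step.hyps(8) unfolding near_def by force
  qed
  moreover from step.IH(1) obtain ss where "chA (r ^ (lev p + 1)) p ss"
    "near y (last (p#ss)) (lastrad (r ^ (lev p + 1)) ss)" by blast
  ultimately show ?case using pop[of "r ^ (lev p + 1)" p ss y q x] step.hyps(1,2,3) by simp
qed

lemma inF_bound: "inF p x \<Longrightarrow> \<exists>k\<in>K p. dist x k < 3 * r ^ (lev p + 1)"
  using inF_chain[of p x] tail_bound[of "r ^ (lev p + 1)" p] unfolding near_def by fastforce

lemma inF_open: "inF p x \<Longrightarrow> \<exists>e>0. \<forall>z. dist z x < e \<longrightarrow> inF p z"
proof (induction rule: inF.induct)
  case (base k p x)
  show ?case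
  proof (intro exI[of _ "r ^ (lev p + 1) - dist x k"] conjI allI impI)
    fix z assume "dist z x < r ^ (lev p + 1) - dist x k"
    moreover have "dist z k \<le> dist z x + dist x k" by (rule dist_triangle)
    ultimately show "inF p z" using base by (intro inF.base[of k]) auto
  qed (use base in auto)
next
  case (step q p y u u' x)
  show ?case
  proof (intro exI[of _ "4 * r ^ (lev q + 1) - dist x u'"] conjI allI impI)
    fix z assume "dist z x < 4 * r ^ (lev q + 1) - dist x u'"
    moreover have "dist z u' \<le> dist z x + dist x u'" by (rule dist_triangle)
    ultimately have dz: "dist z u' < 4 * r ^ (lev q + 1)" by linarith
    show "inF p z" by (rule inF.step[of q p y u u' z]) (use step.hyps dz in simp_all)
  qed (use step in auto)
qed

lemma inF_sep:
  assumes "p \<in> Pc" "p' \<in> Pc" "p \<noteq> p'" "lev p = lev p'" "col p = col p'"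
    "inF p u" "inF p' x" "dist x u < 4 * r ^ (lev p + 1)"
  shows False
proof -
  obtain k where k: "k \<in> K p" "dist u k < 3 * r ^ (lev p + 1)" using inF_bound[OF assms(6)] by blast
  obtain k' where k': "k' \<in> K p'" "dist x k' < 3 * r ^ (lev p + 1)" using inF_bound[OF assms(7)] assms(4) by auto
  have "g * r ^ lev p \<le> dist k k'" using gap[OF assms(1-5) k(1) k'(1)] .
  also have "dist k k' \<le> dist k u + dist u x + dist x k'" by (rule tri3)
  also have "\<dots> < 10 * r ^ (lev p + 1)" using k k' assms(8) by (simp add: dist_commute)
  also have "\<dots> = (10 * r) * r ^ lev p" by simp
  also have "\<dots> \<le> g * r ^ lev p" using g_big r_pos rpow_pos[of "lev p"]
    by (intro mult_right_mono) auto
  finally show False by simp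
qed

end

lemma leb_ball:
  fixes \<U> :: "'a::metric_space set set"
  assumes "lebesgue \<U> \<ge> ereal t" "0 < t"
  shows "\<exists>U\<in>\<U>. ball z (t/2) \<subseteq> U"
proof -
  have "lebesgue \<U> \<le> lebesgue_at \<U> z" unfolding lebesgue_def by (rule INF_lower) simp
  moreover have "lebesgue_at \<U> z \<le> (SUP U\<in>\<U>. dist_to_compl z U)" unfolding lebesgue_at_def by (rule min.cobounded1)
  ultimately have "ereal t \<le> (SUP U\<in>\<U>. dist_to_compl z U)" using assms(1) by (meson order_trans)
  moreover have "ereal (t/2) < ereal t" using assms(2) by simp
  ultimately have "ereal (t/2) < (SUP U\<in>\<U>. dist_to_compl z U)" by (rule order.strict_trans2[rotated])
  then obtain U where U: "U \<in> \<U>" "ereal (t/2) < dist_to_compl z U" by (auto simp: less_SUP_iff)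
  have "ball z (t/2) \<subseteq> U"
  proof (cases "- U = {}")
    case True then show ?thesis by auto
  next
    case False
    with U have i: "t/2 < infdist z (- U)" by (simp add: dist_to_compl_def)
    show ?thesis
    proof
      fix y assume y: "y \<in> ball z (t/2)"
      show "y \<in> U"
      proof (rule ccontr)
        assume "y \<notin> U"
        hence "infdist z (- U) \<le> dist z y" by (intro infdist_le) auto
        with y i show False by simp
      qed
    qed
  qed
  with U show ?thesis by blast
qed

lemma diameter_le_metric:
  assumes "\<And>x y. x \<in> S \<Longrightarrow> y \<in> S \<Longrightarrow> dist x y \<le> d" "0 \<le> d"
  shows "diameter S \<le> d"
  using assms by (auto simp: diameter_def intro!: cSUP_least)

theorem theorem5p1:
  fixes n :: nat
  assumes "bounded (UNIV::'a::metric_space set)"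
    and "\<exists>x y::'a. x \<noteq> y"
    and "\<exists>m. cdim_witness TYPE('a) m"
    and "n = cdim TYPE('a)"
  shows "\<exists>r0>0. \<forall>r. 0 < r \<and> r < r0 \<longrightarrow>
    (\<exists>(C::nat set) (\<U>::nat \<Rightarrow> nat \<Rightarrow> 'a set set).
       card C = n + 1 \<and> (\<forall>j. colored_open_cover C (\<U> j)) \<and>
       (\<forall>V. hyp_approx r V \<longrightarrow>
          (\<forall>c\<in>C. \<U> 0 c = {UNIV}) \<and>
          (\<forall>j\<ge>1. mesh (cover_of C (\<U> j)) < r ^ j) \<and>
          (\<forall>j. \<forall>v\<in>V (int j + 1). \<exists>U\<in>cover_of C (\<U> j). hball r (int j + 1) v \<subseteq> U) \<and>
          (\<forall>c\<in>C. \<forall>j j'. j' \<le> j \<longrightarrow> (\<forall>U\<in>\<U> j c. \<forall>U'\<in>\<U> j' c. U \<noteq> U' \<longrightarrow>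
              hyp_BU r V j U \<subseteq> U' \<or> hyp_BU r V j U \<inter> U' = {}))))"
  proof -
  have "cdim_witness TYPE('a) (cdim TYPE('a))" unfolding cdim_def by (rule LeastI_ex[OF assms(3)])
  hence wit: "cdim_witness TYPE('a) n" using assms(4) by simp
  then obtain \<delta> \<tau>0 where \<delta>: "\<delta> > 0" "\<tau>0 > 0" and W: "\<forall>\<tau>. 0 < \<tau> \<and> \<tau> < \<tau>0 \<longrightarrow>
     (\<exists>(C::nat set) (F::nat \<Rightarrow> 'a set set). card C = n + 1 \<and> colored_open_cover C F
        \<and> mesh (cover_of C F) \<le> \<tau> \<and> lebesgue (cover_of C F) \<ge> ereal (\<delta> * \<tau>))"
    unfolding cdim_witness_def by blast
  define r0 where "r0 = min (\<delta>/200) (min (1/100) \<tau>0)"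
  have bUNIV: "bounded (UNIV::'a set)" by fact
  show ?thesis
  proof (intro exI[of _ r0] conjI allI impI)
    show "0 < r0" using \<delta> by (simp add: r0_def)
    fix r :: real assume r: "0 < r \<and> r < r0"
    hence r1: "0 < r" "r < \<delta>/200" "r < 1/100" "r < \<tau>0" by (auto simp: r0_def)
    have rj: "r ^ j \<le> r" if "1 \<le> j" for j :: nat
    proof -
      have "r ^ j \<le> r ^ 1" using that r1 by (intro power_decreasing) auto
      then show ?thesis by simp
    qed
    define Pr where "Pr j C F \<longleftrightarrow> card C = n + 1 \<and> colored_open_cover C F
        \<and> mesh (cover_of C F) \<le> r ^ j / 2 \<and> lebesgue (cover_of C F) \<ge> ereal (\<delta> * (r ^ j / 2))"
      for j and C :: "nat set" and F :: "nat \<Rightarrow> 'a set set"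
    have exP: "\<exists>CF. Pr j (fst CF) (snd CF)" if j: "1 \<le> j" for j
    proof -
      have a: "0 < r ^ j / 2" using r1 by simp
      have b: "r ^ j / 2 < \<tau>0" using rj[OF j] r1 by simp
      have "\<exists>(C::nat set) (F::nat \<Rightarrow> 'a set set). card C = n + 1 \<and> colored_open_cover C F
        \<and> mesh (cover_of C F) \<le> r ^ j / 2 \<and> lebesgue (cover_of C F) \<ge> ereal (\<delta> * (r ^ j / 2))"
        using mp[OF spec[OF W, of "r ^ j / 2"] conjI[OF a b]] .
      then obtain C F where "Pr j C F" unfolding Pr_def by (elim exE)
      then show ?thesis by (intro exI[of _ "(C, F)"]) simp
    qed
    define CF where "CF j = (SOME CF. Pr j (fst CF) (snd CF))" for j
    define Cs where "Cs j = fst (CF j)" for j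
    define Fs where "Fs j = snd (CF j)" for j
    have PrCF: "Pr j (Cs j) (Fs j)" if "1 \<le> j" for j
      unfolding Cs_def Fs_def CF_def by (rule someI_ex[OF exP[OF that]])
    have Cs_card: "card (Cs j) = n + 1" and Fs_coc: "colored_open_cover (Cs j) (Fs j)"
      and Fs_mesh: "mesh (cover_of (Cs j) (Fs j)) \<le> r ^ j / 2"
      and Fs_leb: "lebesgue (cover_of (Cs j) (Fs j)) \<ge> ereal (\<delta> * (r ^ j / 2))" if "1 \<le> j" for j
      using PrCF[OF that] unfolding Pr_def by simp_all
    have exh: "\<forall>j. \<exists>h. 1 \<le> j \<longrightarrow> bij_betw h {..n} (Cs j)"
    proof
      fix j :: nat
      show "\<exists>h. 1 \<le> j \<longrightarrow> bij_betw h {..n} (Cs j)"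
      proof (cases "1 \<le> j")
        case True
        have "finite (Cs j)" using Cs_card[OF True] by (intro card_ge_0_finite) simp
        then show ?thesis using finite_same_card_bij[of "{..n}" "Cs j"] Cs_card[OF True] by auto
      qed simp
    qed
    from choice[OF exh] obtain h where h: "\<And>j. 1 \<le> j \<Longrightarrow> bij_betw (h j) {..n} (Cs j)" by blast
    define Pc :: "(nat \<times> nat \<times> 'a set) set" where "Pc = {(j, c, W). 1 \<le> j \<and> c \<le> n \<and> W \<in> Fs j (h j c)}"
    define g where "g = \<delta> / 8"
    define K :: "nat \<times> nat \<times> 'a set \<Rightarrow> 'a set" where "K = (\<lambda>(j, c, W). {z. ball z (g * r ^ j) \<subseteq> W})"
    have g_pos: "0 < g" using \<delta> by (simp add: g_def)
    have Kmem: "a \<in> K (j, c, W) \<longleftrightarrow> ball a (g * r ^ j) \<subseteq> W" for a j c W by (simp add: K_def)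
    have KW: "a \<in> W" if "a \<in> K (j, c, W)" for a j c W
      using that g_pos r1 by (auto simp: Kmem)
    have diamW: "dist a b \<le> r ^ j / 2" if "(j, c, W) \<in> Pc" "a \<in> W" "b \<in> W" for a b j c W
    proof -
      from that have j: "1 \<le> j" "c \<le> n" "W \<in> Fs j (h j c)" by (auto simp: Pc_def)
      have "h j c \<in> Cs j" using h[OF j(1)] j(2) by (auto simp: bij_betw_def)
      hence Wc: "W \<in> cover_of (Cs j) (Fs j)" using j by (auto simp: cover_of_def)
      have "dist a b \<le> diameter W" using diameter_bounded_bound[OF bounded_subset[OF bUNIV] that(2,3)] by simp
      also have "diameter W \<le> mesh (cover_of (Cs j) (Fs j))"
        unfolding mesh_def
      proof (rule cSUP_upper[OF Wc])
        show "bdd_above (diameter ` cover_of (Cs j) (Fs j))"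
          by (rule bdd_aboveI[of _ "diameter (UNIV::'a set)"]) (auto intro: diameter_subset[OF _ bUNIV])
      qed
      also have "\<dots> \<le> r ^ j / 2" using Fs_mesh[OF j(1)] .
      finally show ?thesis .
    qed
    interpret H: hc r g Pc fst "\<lambda>p. fst (snd p)" K
    proof
      show "0 < r" using r1 by simp
      show "r \<le> 1/100" using r1 by simp
      show "25 * r < g" using r1 by (simp add: g_def)
    next
      fix p q :: "nat \<times> nat \<times> 'a set" and a b
      assume as: "p \<in> Pc" "q \<in> Pc" "p \<noteq> q" "fst p = fst q" "fst (snd p) = fst (snd q)" "a \<in> K p" "b \<in> K q"
      obtain j c W where p: "p = (j, c, W)" by (cases p) auto
      obtain W' where q: "q = (j, c, W')" using as(4,5) p by (cases q) auto
      have j: "1 \<le> j" "c \<le> n" "W \<in> Fs j (h j c)" "W' \<in> Fs j (h j c)" using as(1,2) p q by (auto simp: Pc_def)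
      have "h j c \<in> Cs j" using h[OF j(1)] j(2) by (auto simp: bij_betw_def)
      hence "pairwise disjnt (Fs j (h j c))" using Fs_coc[OF j(1)] by (auto simp: colored_open_cover_def)
      moreover have "W \<noteq> W'" using as(3) p q by auto
      ultimately have dj: "disjnt W W'" using j by (auto simp: pairwise_def)
      have "b \<in> W'" using KW as(7) q by auto
      hence "b \<notin> W" using dj by (auto simp: disjnt_def)
      hence "b \<notin> ball a (g * r ^ j)" using as(6) p by (auto simp: Kmem)
      then show "g * r ^ fst p \<le> dist a b" using p by simp
    next
      fix p :: "nat \<times> nat \<times> 'a set" and a b
      assume as: "p \<in> Pc" "a \<in> K p" "b \<in> K p"
      obtain j c W where p: "p = (j, c, W)" by (cases p) auto
      show "dist a b \<le> r ^ fst p / 2" using diamW[of j c W a b] as p KW by auto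
    qed
    define Fp where "Fp p = {x. H.inF p x}" for p
    define \<V> :: "nat \<Rightarrow> nat \<Rightarrow> 'a set set" where
      "\<V> = (\<lambda>j c. if j = 0 then {UNIV} else {Fp p | p. p \<in> Pc \<and> fst p = j \<and> fst (snd p) = c})"
    have memV: "Fp p \<in> cover_of {..n} (\<V> j)" if "p \<in> Pc" "fst p = j" "j \<noteq> 0" for p j
    proof -
      have c: "fst (snd p) \<le> n" using that(1) by (auto simp: Pc_def)
      have "Fp p \<in> {Fp q | q. q \<in> Pc \<and> fst q = j \<and> fst (snd q) = fst (snd p)}" using that by blast
      then have "Fp p \<in> \<V> j (fst (snd p))" using that(3) unfolding \<V>_def by (simp only: if_False)
      then show ?thesis using c unfolding cover_of_def by blast
    qed
    have ballF: "\<exists>p\<in>Pc. fst p = j \<and> ball z (2 * r ^ (j + 1)) \<subseteq> Fp p" if j: "1 \<le> j" for j z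
    proof -
      have "0 < \<delta> * (r ^ j / 2)" using \<delta> r1 by simp
      from leb_ball[OF Fs_leb[OF j] this] obtain W where
        W: "W \<in> cover_of (Cs j) (Fs j)" "ball z (\<delta> * (r ^ j / 2) / 2) \<subseteq> W" by blast
      from W(1) obtain c' where c': "c' \<in> Cs j" "W \<in> Fs j c'" by (auto simp: cover_of_def)
      have "c' \<in> h j ` {..n}" using h[OF j] c'(1) by (simp add: bij_betw_def)
      then obtain c where c0: "c \<in> {..n}" "c' = h j c" by (rule imageE)
      hence c: "c \<le> n" "h j c = c'" by simp_all
      let ?p = "(j, c, W)"
      have pP: "?p \<in> Pc" using c c' j by (auto simp: Pc_def)
      have "ball z (2 * r ^ (j + 1)) \<subseteq> Fp ?p"
      proof
        fix y assume y: "y \<in> ball z (2 * r ^ (j + 1))"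
        have "ball y (g * r ^ j) \<subseteq> W"
        proof
          fix w assume w: "w \<in> ball y (g * r ^ j)"
          have "dist z w \<le> dist z y + dist y w" by (rule dist_triangle)
          also have "\<dots> < 2 * r ^ (j + 1) + g * r ^ j" using y w by simp
          also have "\<dots> = (2 * r + g) * r ^ j" by (simp add: algebra_simps)
          also have "\<dots> \<le> (\<delta> / 4) * r ^ j" using r1 by (intro mult_right_mono) (auto simp: g_def)
          finally have "w \<in> ball z (\<delta> * (r ^ j / 2) / 2)" by simp
          then show "w \<in> W" using W(2) by blast
        qed
        hence "y \<in> K ?p" by (simp add: Kmem)
        then show "y \<in> Fp ?p" unfolding Fp_def using r1 by (auto intro!: H.inF.base[of y])
      qed
      then show ?thesis using pP by (intro bexI[of _ ?p]) auto
    qed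
    have Fopen: "open (Fp p)" for p
      unfolding open_contains_ball
    proof
      fix x assume "x \<in> Fp p"
      hence "H.inF p x" by (simp add: Fp_def)
      from H.inF_open[OF this] obtain e where "e > 0" "\<forall>z. dist z x < e \<longrightarrow> H.inF p z" by blast
      then show "\<exists>e>0. ball x e \<subseteq> Fp p" by (intro exI[of _ e]) (auto simp: Fp_def dist_commute)
    qed
    have Fdiam: "diameter (Fp p) \<le> r ^ j / 2 + 6 * r ^ (j + 1)" if "p \<in> Pc" "fst p = j" for p j
    proof (rule diameter_le_metric)
      fix x y assume "x \<in> Fp p" "y \<in> Fp p"
      hence "H.inF p x" "H.inF p y" by (simp_all add: Fp_def)
      with H.inF_bound obtain k k' where k: "k \<in> K p" "dist x k < 3 * r ^ (fst p + 1)" "k' \<in> K p" "dist y k' < 3 * r ^ (fst p + 1)"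
        by blast
      have "dist k k' \<le> r ^ j / 2" using H.diam[OF that(1) k(1) k(3)] that by simp
      moreover have "dist x y \<le> dist x k + dist k k' + dist y k'"
        using H.tri3[of x y k k'] dist_commute[of y k'] by simp
      ultimately show "dist x y \<le> r ^ j / 2 + 6 * r ^ (j + 1)" using k that(2) by simp
    qed (use r1 in simp)
    have powi: "r powi (int j + 1) = r ^ (j + 1)" for j :: nat
    proof -
      have "int j + 1 = int (j + 1)" by simp
      then show ?thesis by (simp only: power_int_of_nat)
    qed
    show "\<exists>(C::nat set) (\<U>::nat \<Rightarrow> nat \<Rightarrow> 'a set set).
       card C = n + 1 \<and> (\<forall>j. colored_open_cover C (\<U> j)) \<and>
       (\<forall>V. hyp_approx r V \<longrightarrow>
          (\<forall>c\<in>C. \<U> 0 c = {UNIV}) \<and>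
          (\<forall>j\<ge>1. mesh (cover_of C (\<U> j)) < r ^ j) \<and>
          (\<forall>j. \<forall>v\<in>V (int j + 1). \<exists>U\<in>cover_of C (\<U> j). hball r (int j + 1) v \<subseteq> U) \<and>
          (\<forall>c\<in>C. \<forall>j j'. j' \<le> j \<longrightarrow> (\<forall>U\<in>\<U> j c. \<forall>U'\<in>\<U> j' c. U \<noteq> U' \<longrightarrow>
              hyp_BU r V j U \<subseteq> U' \<or> hyp_BU r V j U \<inter> U' = {})))"
    proof (intro exI[of _ "{..n}"] exI[of _ \<V>] conjI allI impI ballI)
      show "card {..n} = n + 1" by simp
    next
      fix j :: nat
      show "colored_open_cover {..n} (\<V> j)"
      proof (cases "j = 0")
        case True
        then show ?thesis by (auto simp: colored_open_cover_def cover_of_def \<V>_def pairwise_def)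
      next
        case False
        hence j: "1 \<le> j" by simp
        have op: "\<forall>U\<in>cover_of {..n} (\<V> j). open U"
          using False Fopen by (auto simp: cover_of_def \<V>_def)
        have cv: "\<Union>(cover_of {..n} (\<V> j)) = UNIV"
        proof (rule set_eqI, simp)
          fix z
          obtain p where p: "p \<in> Pc" "fst p = j" "ball z (2 * r ^ (j + 1)) \<subseteq> Fp p" using ballF[OF j] by blast
          have "z \<in> Fp p" using p(3) r1 by auto
          moreover have "Fp p \<in> cover_of {..n} (\<V> j)"
            using memV p False by blast
          ultimately show "\<exists>U\<in>cover_of {..n} (\<V> j). z \<in> U" by blast
        qed
        have pw: "\<forall>c\<in>{..n}. pairwise disjnt (\<V> j c)"
        proof (intro ballI pairwiseI)
          fix c U U' assume UU: "U \<in> \<V> j c" "U' \<in> \<V> j c" "U \<noteq> U'"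
          have Veq: "\<V> j c = {Fp q | q. q \<in> Pc \<and> fst q = j \<and> fst (snd q) = c}"
            unfolding \<V>_def using False by (rule if_not_P)
          obtain p where p0: "p \<in> Pc" "fst p = j" "fst (snd p) = c" "U = Fp p"
            using UU(1) unfolding Veq by blast
          obtain p' where p0': "p' \<in> Pc" "fst p' = j" "fst (snd p') = c" "U' = Fp p'"
            using UU(2) unfolding Veq by blast
          note pp = p0 p0'
          have "p \<noteq> p'" using pp \<open>U \<noteq> U'\<close> by auto
          show "disjnt U U'"
            unfolding disjnt_def
          proof (rule ccontr)
            assume "U \<inter> U' \<noteq> {}"
            then obtain x where "H.inF p x" "H.inF p' x" using pp by (auto simp: Fp_def)
            then show False using H.inF_sep[OF pp(1,5) \<open>p \<noteq> p'\<close> _ _ \<open>H.inF p x\<close> \<open>H.inF p' x\<close>] pp r1 by simp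
          qed
        qed
        show ?thesis using op cv pw by (simp add: colored_open_cover_def)
      qed
    next
      fix V :: "int \<Rightarrow> 'a set" and c assume "hyp_approx r V" "c \<in> {..n}"
      then show "\<V> 0 c = {UNIV}" by (simp add: \<V>_def)
    next
      fix V :: "int \<Rightarrow> 'a set" and j :: nat assume "hyp_approx r V" "1 \<le> j"
      have ne: "cover_of {..n} (\<V> j) \<noteq> {}"
      proof -
        obtain p where p: "p \<in> Pc" "fst p = j" using ballF[OF \<open>1 \<le> j\<close>] by blast
        then show ?thesis using memV[of p j] \<open>1 \<le> j\<close> by auto
      qed
      have "mesh (cover_of {..n} (\<V> j)) \<le> r ^ j / 2 + 6 * r ^ (j + 1)"
        unfolding mesh_def
      proof (rule cSUP_least[OF ne])
        fix U assume "U \<in> cover_of {..n} (\<V> j)"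
        then obtain p where "p \<in> Pc" "fst p = j" "U = Fp p" using \<open>1 \<le> j\<close> by (auto simp: cover_of_def \<V>_def)
        then show "diameter U \<le> r ^ j / 2 + 6 * r ^ (j + 1)" using Fdiam by simp
      qed
      also have "\<dots> < r ^ j"
      proof -
        have "6 * r ^ (j + 1) = (6 * r) * r ^ j" by simp
        also have "\<dots> < (1/2) * r ^ j" using r1 by (intro mult_strict_right_mono) auto
        finally show ?thesis by simp
      qed
      finally show "mesh (cover_of {..n} (\<V> j)) < r ^ j" .
    next
      fix V :: "int \<Rightarrow> 'a set" and j :: nat and v assume "hyp_approx r V" "v \<in> V (int j + 1)"
      show "\<exists>U\<in>cover_of {..n} (\<V> j). hball r (int j + 1) v \<subseteq> U"
      proof (cases "j = 0")
        case True
        then show ?thesis by (auto simp: cover_of_def \<V>_def)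
      next
        case False
        then obtain p where p: "p \<in> Pc" "fst p = j" "ball v (2 * r ^ (j + 1)) \<subseteq> Fp p" using ballF[of j v] by auto
        have "Fp p \<in> cover_of {..n} (\<V> j)" using memV p False by blast
        then show ?thesis using p(3) by (intro bexI[of _ "Fp p"]) (auto simp: hball_def powi)
      qed
    next
      fix V :: "int \<Rightarrow> 'a set" and c and j j' :: nat and U U'
      assume as: "hyp_approx r V" "c \<in> {..n}" "j' \<le> j" "U \<in> \<V> j c" "U' \<in> \<V> j' c" "U \<noteq> U'"
      have BU: "hyp_BU r V j U \<subseteq> {x. \<exists>u\<in>U. dist x u < 4 * r ^ (j + 1)}"
      proof
        fix x assume "x \<in> hyp_BU r V j U"
        then obtain w where w: "x \<in> hball r (int j + 1) w" "hball r (int j + 1) w \<inter> U \<noteq> {}"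
          unfolding hyp_BU_def by blast
        then obtain u where "u \<in> U" "u \<in> hball r (int j + 1) w" by blast
        hence "dist w x < 2 * r ^ (j + 1)" "u \<in> U" "dist w u < 2 * r ^ (j + 1)"
          using w(1) unfolding hball_def powi by auto
        moreover have "dist x u \<le> dist w x + dist w u" by (rule dist_triangle3)
        ultimately show "x \<in> {x. \<exists>u\<in>U. dist x u < 4 * r ^ (j + 1)}" by force
      qed
      show "hyp_BU r V j U \<subseteq> U' \<or> hyp_BU r V j U \<inter> U' = {}"
      proof (cases "j' = 0")
        case True
        with as(5) have "U' = UNIV" by (simp add: \<V>_def)
        then show ?thesis by (intro disjI1) simp
      next
        case False
        with as(3) have jj: "j \<noteq> 0" by simp
        have "U \<in> {Fp p | p. p \<in> Pc \<and> fst p = j \<and> fst (snd p) = c}" using as(4) jj by (simp add: \<V>_def)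
        then obtain p where p: "p \<in> Pc" "fst p = j" "fst (snd p) = c" "U = Fp p" by blast
        have "U' \<in> {Fp p | p. p \<in> Pc \<and> fst p = j' \<and> fst (snd p) = c}" using as(5) False by (simp add: \<V>_def)
        then obtain p' where p': "p' \<in> Pc" "fst p' = j'" "fst (snd p') = c" "U' = Fp p'" by blast
        show ?thesis
        proof (cases "hyp_BU r V j U \<inter> U' = {}")
          case False
          then obtain x where x1: "x \<in> hyp_BU r V j U" "x \<in> U'" by blast
          from subsetD[OF BU x1(1)] obtain u where "u \<in> U" "dist x u < 4 * r ^ (j + 1)" by blast
          with x1 have xu: "x \<in> U'" "u \<in> U" "dist x u < 4 * r ^ (j + 1)" by auto
          show ?thesis
          proof (cases "j' < j")
            case True
            have "hyp_BU r V j U \<subseteq> U'"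
            proof
              fix z assume "z \<in> hyp_BU r V j U"
              from subsetD[OF BU this] obtain u' where u': "u' \<in> U" "dist z u' < 4 * r ^ (j + 1)" by blast
              have f: "H.inF p' x" "H.inF p u" "H.inF p u'" using xu u' p(4) p'(4) by (simp_all add: Fp_def)
              have "H.inF p' z"
                by (rule H.inF.step[OF p(1) _ _ f(1) f(2) _ f(3)]) (use p p' True xu u' in simp_all)
              then show "z \<in> U'" using p'(4) by (simp add: Fp_def)
            qed
            then show ?thesis by simp
          next
            case nl: False
            with as(3) have "j' = j" by simp
            have "p \<noteq> p'" using as(6) p p' by auto
            have f: "H.inF p' x" "H.inF p u" using xu p(4) p'(4) by (simp_all add: Fp_def)
            have False
              by (rule H.inF_sep[OF p(1) p'(1) \<open>p \<noteq> p'\<close> _ _ f(2) f(1)]) (use p p' \<open>j' = j\<close> xu in simp_all)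
            then show ?thesis ..
          qed
        next
          case True
          then show ?thesis by (rule disjI2)
        qed
      qed
    qed
  qed
qed

end
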